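(* Let $\Gamma$ be a graph and let $f:\Gamma\to\Gamma$ be an irreducible, expanding graph map which is a homotopy equivalence and which is periodic on the vertex set of $\Gamma$ (i.e. $f_V:\mathcal{V}\Gamma\to\mathcal{V}\Gamma$ is a bijection). Then every fold decomposition of $f$ consists of at least $\mathfrak{S}(\Gamma)$ folds, where $\mathfrak{S}(\Gamma)$ is the stack score of $\Gamma$.
   Context: A graph $\Gamma$ is a finite 1-dimensional CW complex (multiple edges and loops allowed) with a chosen orientation on each edge; $\mathcal{V}\Gamma$ is its vertex set, $\mathcal{E}\Gamma$ its set of (positively oriented) edges, $\mathcal{E}^{\pm}\Gamma$ the set of edges with both orientations, $\bar e$ the reverse of $e$, and $\iota(e),\tau(e)$ the initial and terminal vertices. An edge path is a nonempty concatenation $u=e_1\cdots e_k$ of oriented edges with $\tau(e_i)=\iota(e_{i+1})$; $|u|=k$ counts edges without cancelling backtracks, and $u$ traverses an edge $e$ if $e$ or $\bar e$ occurs in it. A graph map $f:\Gamma_1\to\Gamma_2$ consists of a vertex map $f_V$ and an assignment of an edge path $f(e)$ in $\Gamma_2$ to each $e\in\mathcal{E}^\pm\Gamma_1$ with $\iota(f(e))=f_V(\iota(e))$ and $f(\bar e)=\overline{f(e)}$; it extends to edge paths by concatenation, powers are compositions, and $f$ is regarded as a continuous map. A graph isomorphism is a graph map with $f_V$ bijective which restricts to a bijection from $\mathcal{E}^\pm\Gamma_1$ onto the single edges $\mathcal{E}^\pm\Gamma_2$; an automorphism of $G$ is an isomorphism $G\to G$, and $\mathrm{Aut}(G)$ is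 the automorphism group. The transition matrix $T(f)$ of a self map has $(i,j)$ entry the number of times $f(e_i)$ traverses $e_j$. $f$ is irreducible if $T(f)$ is an irreducible matrix and every vertex has valence at least $3$; $f$ is expanding if $|f^n(e)|\to\infty$ as $n\to\infty$ for every edge $e$. Folds: for distinct oriented edges $e_0,e_1$ with $e_1\neq\bar e_0$ and $\iota(e_0)=\iota(e_1)$: the proper full fold of $e_1$ over $e_0$ subdivides $e_1=e_1''e_1'$ and identifies $e_1''$ with $e_0$ (map $e_1\mapsto e_0e_1'$, other edges fixed); the complete fold identifies $e_0$ and $e_1$ entirely; the partial fold subdivides $e_0=e_0'e_0''$, $e_1=e_1''e_1'$ and identifies $e_1''$ with $e_0'$ (map $e_0\mapsto e_0'e_0''$, $e_1\mapsto e_0'e_1'$). A fold decomposition of $f:\Gamma\to\Gamma$ with $m$ folds is an expression $f=h\circ f_m\circ\cdots\circ f_1$ with $\Gamma_1=\Gamma$, each $f_i:\Gamma_i\to\Gamma_{i+1}$ a fold and $h:\Gamma_{m+1}\to\Gamma$ a graph isomorphism. Stack score: a supergraph of $\Gamma$ is a graph $G$ containing $\Gamma$ as a subgraph. For a supergraph $G$ with $\mathcal{V}G=\mathcal{V}\Gamma$ and $\psi\in\mathrm{Aut}(G)$, let $\sim_\psi$ be the equivalence relation on $\mathcal{E}\Gamma$ (unoriented edges) generated by $a\sim_\psi\psi(a)$ whenever $\psi(a)$ (as an unoriented edge) lies in $\mathcal{E}\Gamma$. The stack score $\mathfrak{S}(\Gamma)$ is the minimum, over all such pairs $(G,\psi)$,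 of the number of $\sim_\psi$-equivalence classes. *)

theory Defs
  imports Main
begin

section \<open>Finite graphs (1-dimensional CW complexes, loops and multi-edges allowed)\<close>

record ('v, 'e) mgraph =
  gverts :: "'v set"
  gedges :: "'e set"
  gsrc   :: "'e \<Rightarrow> 'v"
  gtgt   :: "'e \<Rightarrow> 'v"

definition wf_graph :: "('v, 'e) mgraph \<Rightarrow> bool" where
  "wf_graph G \<longleftrightarrow> finite (gverts G) \<and> finite (gedges G) \<and>
     (\<forall>e\<in>gedges G. gsrc G e \<in> gverts G \<and> gtgt G e \<in> gverts G)"

text \<open>Oriented edges: (e, True) is e, (e, False) is its reverse.\<close>
type_synonym 'e oedge = "'e \<times> bool"

definition oedges :: "('v, 'e) mgraph \<Rightarrow> 'e oedge set" where
  "oedges G = gedges G \<times> UNIV"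

definition orev :: "'e oedge \<Rightarrow> 'e oedge" where
  "orev d = (fst d, \<not> snd d)"

definition oinit :: "('v, 'e) mgraph \<Rightarrow> 'e oedge \<Rightarrow> 'v" where
  "oinit G d = (if snd d then gsrc G (fst d) else gtgt G (fst d))"

definition oterm :: "('v, 'e) mgraph \<Rightarrow> 'e oedge \<Rightarrow> 'v" where
  "oterm G d = (if snd d then gtgt G (fst d) else gsrc G (fst d))"

definition is_path :: "('v, 'e) mgraph \<Rightarrow> 'e oedge list \<Rightarrow> 'v \<Rightarrow> 'v \<Rightarrow> bool" where
  "is_path G p u v \<longleftrightarrow> p \<noteq> [] \<and> set p \<subseteq> oedges G \<and>
     oinit G (hd p) = u \<and> oterm G (last p) = v \<and>
     (\<forall>i. Suc i < length p \<longrightarrow> oterm G (p ! i) = oinit G (p ! Suc i))"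

definition is_tpath :: "('v, 'e) mgraph \<Rightarrow> 'e oedge list \<Rightarrow> 'v \<Rightarrow> 'v \<Rightarrow> bool" where
  "is_tpath G p u v \<longleftrightarrow> (p = [] \<and> u = v \<and> u \<in> gverts G) \<or> is_path G p u v"

definition rev_path :: "'e oedge list \<Rightarrow> 'e oedge list" where
  "rev_path p = rev (map orev p)"

record ('v, 'e, 'w, 'f) gmap =
  vmap :: "'v \<Rightarrow> 'w"
  emap :: "'e \<Rightarrow> 'f oedge list"   (* image of the positively oriented edge *)

definition img :: "('v, 'e, 'w, 'f) gmap \<Rightarrow> 'e oedge \<Rightarrow> 'f oedge list" where
  "img f d = (if snd d then emap f (fst d) else rev_path (emap f (fst d)))"

definition is_gmap :: "('v, 'e) mgraph \<Rightarrow> ('w, 'f) mgraph \<Rightarrow> ('v, 'e, 'w, 'f) gmap \<Rightarrow> bool" where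
  "is_gmap G H f \<longleftrightarrow> (\<forall>v\<in>gverts G. vmap f v \<in> gverts H) \<and>
     (\<forall>e\<in>gedges G. is_path H (emap f e) (vmap f (gsrc G e)) (vmap f (gtgt G e)))"

definition gmap_eq :: "('v, 'e) mgraph \<Rightarrow> ('v, 'e, 'w, 'f) gmap \<Rightarrow> ('v, 'e, 'w, 'f) gmap \<Rightarrow> bool" where
  "gmap_eq G f g \<longleftrightarrow> (\<forall>v\<in>gverts G. vmap f v = vmap g v) \<and> (\<forall>e\<in>gedges G. emap f e = emap g e)"

text \<open>Composition g \<circ> f (edge images concatenated, no cancellation).\<close>
definition gcomp :: "('w, 'f, 'x, 'g) gmap \<Rightarrow> ('v, 'e, 'w, 'f) gmap \<Rightarrow> ('v, 'e, 'x, 'g) gmap" where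
  "gcomp g f = \<lparr> vmap = vmap g \<circ> vmap f, emap = (\<lambda>e. concat (map (img g) (emap f e))) \<rparr>"

definition gid :: "('v, 'e, 'v, 'e) gmap" where
  "gid = \<lparr> vmap = id, emap = (\<lambda>e. [(e, True)]) \<rparr>"

primrec gpow :: "('v, 'e, 'v, 'e) gmap \<Rightarrow> nat \<Rightarrow> ('v, 'e, 'v, 'e) gmap" where
  "gpow f 0 = gid"
| "gpow f (Suc n) = gcomp f (gpow f n)"

definition is_giso :: "('v, 'e) mgraph \<Rightarrow> ('w, 'f) mgraph \<Rightarrow> ('v, 'e, 'w, 'f) gmap \<Rightarrow> bool" where
  "is_giso G H h \<longleftrightarrow> is_gmap G H h \<and> bij_betw (vmap h) (gverts G) (gverts H) \<and>
     (\<forall>e\<in>gedges G. length (emap h e) = 1) \<and>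
     bij_betw (\<lambda>d. hd (img h d)) (oedges G) (oedges H)"

definition trans_mat :: "('v, 'e, 'v, 'e) gmap \<Rightarrow> 'e \<Rightarrow> 'e \<Rightarrow> nat" where
  "trans_mat f e e' = length (filter (\<lambda>d. fst d = e') (emap f e))"

primrec mat_pow :: "('v, 'e) mgraph \<Rightarrow> ('e \<Rightarrow> 'e \<Rightarrow> nat) \<Rightarrow> nat \<Rightarrow> 'e \<Rightarrow> 'e \<Rightarrow> nat" where
  "mat_pow G T 0 e e' = (if e = e' then 1 else 0)"
| "mat_pow G T (Suc n) e e' = (\<Sum>e''\<in>gedges G. T e e'' * mat_pow G T n e'' e')"

definition irreducible_matrix :: "('v, 'e) mgraph \<Rightarrow> ('e \<Rightarrow> 'e \<Rightarrow> nat) \<Rightarrow> bool" where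
  "irreducible_matrix G T \<longleftrightarrow> (\<forall>e\<in>gedges G. \<forall>e'\<in>gedges G. \<exists>n>0. mat_pow G T n e e' > 0)"

definition valence :: "('v, 'e) mgraph \<Rightarrow> 'v \<Rightarrow> nat" where
  "valence G v = card {d \<in> oedges G. oinit G d = v}"

definition irreducible_map :: "('v, 'e) mgraph \<Rightarrow> ('v, 'e, 'v, 'e) gmap \<Rightarrow> bool" where
  "irreducible_map G f \<longleftrightarrow> irreducible_matrix G (trans_mat f) \<and> (\<forall>v\<in>gverts G. valence G v \<ge> 3)"

definition expanding :: "('v, 'e) mgraph \<Rightarrow> ('v, 'e, 'v, 'e) gmap \<Rightarrow> bool" where
  "expanding G f \<longleftrightarrow> (\<forall>e\<in>gedges G. filterlim (\<lambda>n. length (emap (gpow f n) e)) at_top sequentially)"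

definition cancel1 :: "'e oedge list \<Rightarrow> 'e oedge list \<Rightarrow> bool" where
  "cancel1 p q \<longleftrightarrow> (\<exists>xs ys d. p = xs @ [d, orev d] @ ys \<and> q = xs @ ys)"

definition path_htpc :: "'e oedge list \<Rightarrow> 'e oedge list \<Rightarrow> bool" where
  "path_htpc = (sup cancel1 (conversep cancel1))\<^sup>*\<^sup>*"

text \<open>Two maps G \<rightarrow> H (edge images possibly trivial paths) are homotopic iff there are vertex
  tracks p v from f v to g v with g(e) homotopic rel endpoints to (p (iota e))^-1 f(e) p (tau e).\<close>
definition ghomotopic :: "('v, 'e) mgraph \<Rightarrow> ('w, 'f) mgraph \<Rightarrow> ('v, 'e, 'w, 'f) gmap \<Rightarrow> ('v, 'e, 'w, 'f) gmap \<Rightarrow> bool" where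
  "ghomotopic G H f g \<longleftrightarrow> (\<exists>p. (\<forall>v\<in>gverts G. is_tpath H (p v) (vmap f v) (vmap g v)) \<and>
     (\<forall>e\<in>gedges G. path_htpc (emap g e) (rev_path (p (gsrc G e)) @ emap f e @ p (gtgt G e))))"

definition is_cmap :: "('v, 'e) mgraph \<Rightarrow> ('w, 'f) mgraph \<Rightarrow> ('v, 'e, 'w, 'f) gmap \<Rightarrow> bool" where
  "is_cmap G H f \<longleftrightarrow> (\<forall>v\<in>gverts G. vmap f v \<in> gverts H) \<and>
     (\<forall>e\<in>gedges G. is_tpath H (emap f e) (vmap f (gsrc G e)) (vmap f (gtgt G e)))"

definition homotopy_equiv :: "('v, 'e) mgraph \<Rightarrow> ('v, 'e, 'v, 'e) gmap \<Rightarrow> bool" where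
  "homotopy_equiv G f \<longleftrightarrow> (\<exists>g. is_cmap G G g \<and>
     ghomotopic G G (gcomp g f) gid \<and> ghomotopic G G (gcomp f g) gid)"

text \<open>Untouched vertices/edges keep their
  names, new vertices/edges get fresh names; the isomorphism h at the end of a fold
  decomposition absorbs all naming choices.\<close>

definition fold_base :: "('v, 'e) mgraph \<Rightarrow> 'e oedge \<Rightarrow> 'e oedge \<Rightarrow> bool" where
  "fold_base G d0 d1 \<longleftrightarrow> d0 \<in> oedges G \<and> d1 \<in> oedges G \<and> fst d0 \<noteq> fst d1 \<and>
     oinit G d0 = oinit G d1"

definition complete_fold :: "('v, 'e) mgraph \<Rightarrow> ('v, 'e, 'v, 'e) gmap \<Rightarrow> ('v, 'e) mgraph \<Rightarrow> bool" where
  "complete_fold G f G' \<longleftrightarrow> (\<exists>d0 d1. fold_base G d0 d1 \<and>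
     (let q = (\<lambda>v. if v = oterm G d1 then oterm G d0 else v) in
       gverts G' = q ` gverts G \<and> gedges G' = gedges G - {fst d1} \<and>
       (\<forall>e\<in>gedges G'. gsrc G' e = q (gsrc G e) \<and> gtgt G' e = q (gtgt G e)) \<and>
       (\<forall>v\<in>gverts G. vmap f v = q v) \<and>
       (\<forall>e\<in>gedges G - {fst d1}. emap f e = [(e, True)]) \<and>
       img f d1 = [d0]))"

definition full_fold :: "('v, 'e) mgraph \<Rightarrow> ('v, 'e, 'v, 'e) gmap \<Rightarrow> ('v, 'e) mgraph \<Rightarrow> bool" where
  "full_fold G f G' \<longleftrightarrow> (\<exists>d0 d1 n. fold_base G d0 d1 \<and> n \<notin> gedges G \<and>
     gverts G' = gverts G \<and> gedges G' = (gedges G - {fst d1}) \<union> {n} \<and>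
     (\<forall>e\<in>gedges G - {fst d1}. gsrc G' e = gsrc G e \<and> gtgt G' e = gtgt G e) \<and>
     gsrc G' n = oterm G d0 \<and> gtgt G' n = oterm G d1 \<and>
     (\<forall>v\<in>gverts G. vmap f v = v) \<and>
     (\<forall>e\<in>gedges G - {fst d1}. emap f e = [(e, True)]) \<and>
     img f d1 = [d0, (n, True)])"

definition partial_fold :: "('v, 'e) mgraph \<Rightarrow> ('v, 'e, 'v, 'e) gmap \<Rightarrow> ('v, 'e) mgraph \<Rightarrow> bool" where
  "partial_fold G f G' \<longleftrightarrow> (\<exists>d0 d1 w a b c. fold_base G d0 d1 \<and> w \<notin> gverts G \<and>
     a \<notin> gedges G \<and> b \<notin> gedges G \<and> c \<notin> gedges G \<and> a \<noteq> b \<and> a \<noteq> c \<and> b \<noteq> c \<and>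
     gverts G' = gverts G \<union> {w} \<and>
     gedges G' = (gedges G - {fst d0, fst d1}) \<union> {a, b, c} \<and>
     (\<forall>e\<in>gedges G - {fst d0, fst d1}. gsrc G' e = gsrc G e \<and> gtgt G' e = gtgt G e) \<and>
     gsrc G' a = oinit G d0 \<and> gtgt G' a = w \<and>
     gsrc G' b = w \<and> gtgt G' b = oterm G d0 \<and>
     gsrc G' c = w \<and> gtgt G' c = oterm G d1 \<and>
     (\<forall>v\<in>gverts G. vmap f v = v) \<and>
     (\<forall>e\<in>gedges G - {fst d0, fst d1}. emap f e = [(e, True)]) \<and>
     img f d0 = [(a, True), (b, True)] \<and> img f d1 = [(a, True), (c, True)])"

definition is_fold :: "('v, 'e) mgraph \<Rightarrow> ('v, 'e, 'v, 'e) gmap \<Rightarrow> ('v, 'e) mgraph \<Rightarrow> bool" where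
  "is_fold G f G' \<longleftrightarrow> wf_graph G' \<and> (full_fold G f G' \<or> complete_fold G f G' \<or> partial_fold G f G')"

text \<open>f_k \<circ> ... \<circ> f_1 (with fs 0 = f_1).\<close>
primrec chain :: "(nat \<Rightarrow> ('v, 'e, 'v, 'e) gmap) \<Rightarrow> nat \<Rightarrow> ('v, 'e, 'v, 'e) gmap" where
  "chain fs 0 = gid"
| "chain fs (Suc k) = gcomp (fs k) (chain fs k)"

definition fold_decomposition :: "('v, 'e) mgraph \<Rightarrow> ('v, 'e, 'v, 'e) gmap \<Rightarrow> nat \<Rightarrow> bool" where
  "fold_decomposition G f m \<longleftrightarrow> (\<exists>Gs fs h. Gs 0 = G \<and>
     (\<forall>i<m. is_fold (Gs i) (fs i) (Gs (Suc i))) \<and>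
     is_giso (Gs m) G h \<and> gmap_eq G f (gcomp h (chain fs m)))"

definition supergraph :: "('v, 'e) mgraph \<Rightarrow> ('v, 'e) mgraph \<Rightarrow> bool" where
  "supergraph \<Gamma> G \<longleftrightarrow> wf_graph G \<and> gverts G = gverts \<Gamma> \<and> gedges \<Gamma> \<subseteq> gedges G \<and>
     (\<forall>e\<in>gedges \<Gamma>. gsrc G e = gsrc \<Gamma> e \<and> gtgt G e = gtgt \<Gamma> e)"

definition stack_gen :: "('v, 'e) mgraph \<Rightarrow> ('v, 'e, 'v, 'e) gmap \<Rightarrow> 'e rel" where
  "stack_gen \<Gamma> \<psi> = {(a, b). a \<in> gedges \<Gamma> \<and> b \<in> gedges \<Gamma> \<and> b = fst (hd (emap \<psi> a))}"

definition stack_classes :: "('v, 'e) mgraph \<Rightarrow> ('v, 'e, 'v, 'e) gmap \<Rightarrow> nat" where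
  "stack_classes \<Gamma> \<psi> = card (gedges \<Gamma> // ((stack_gen \<Gamma> \<psi> \<union> (stack_gen \<Gamma> \<psi>)\<inverse>)\<^sup>*))"

definition stack_score :: "('v, 'e) mgraph \<Rightarrow> nat" where
  "stack_score \<Gamma> = (LEAST k. \<exists>G \<psi>. supergraph \<Gamma> G \<and> is_giso G G \<psi> \<and> stack_classes \<Gamma> \<psi> = k)"

end

theory Submission
  imports Defs "HOL-Library.FuncSet"
begin


lemma img_True[simp]: "img f (c, True) = emap f c" by (simp add: img_def)
lemma img_False[simp]: "img f (c, False) = rev_path (emap f c)" by (simp add: img_def)
lemma rev_path_single[simp]: "rev_path [(c,b)] = [(c, \<not> b)]" by (simp add: rev_path_def orev_def)
lemma rev_path_rev_path[simp]: "rev_path (rev_path p) = p"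
  by (simp add: rev_path_def orev_def rev_map comp_def)

lemma img_single: "emap f c = [(c', b')] \<Longrightarrow> \<exists>b''. img f (c, b) = [(c', b'')]"
  by (cases b) auto

lemma gcomp_single: "emap g e = [(c,b)] \<Longrightarrow> emap (gcomp f g) e = img f (c,b)"
  by (simp add: gcomp_def)

lemma fold_vmap_sub:
  assumes "is_fold G fo G'" shows "vmap fo ` gverts G \<subseteq> gverts G'"
  using assms unfolding is_fold_def full_fold_def complete_fold_def partial_fold_def Let_def
  by auto

lemma fold_base_in:
  assumes "wf_graph G" "fold_base G d0 d1"
  shows "fst d0 \<in> gedges G" "fst d1 \<in> gedges G" "oterm G d0 \<in> gverts G" "oterm G d1 \<in> gverts G"
  using assms unfolding fold_base_def oedges_def wf_graph_def oterm_def by auto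

lemma full_step:
  fixes G G' :: "('v,'e) mgraph"
  assumes wfG: "wf_graph G" and wfG': "wf_graph G'" and fold: "full_fold G fo G'"
    and WV: "W \<subseteq> gverts G"
    and TE: "T \<subseteq> gedges G"
    and Tend: "\<forall>c\<in>T. gsrc G c \<in> W \<and> gtgt G c \<in> W"
  shows "\<exists>T'. T' \<subseteq> gedges G' \<and> (\<forall>c\<in>T'. gsrc G' c \<in> vmap fo ` W \<and> gtgt G' c \<in> vmap fo ` W)
     \<and> (\<forall>c'\<in>T'. \<exists>c\<in>T. \<exists>b. emap fo c = [(c',b)])
     \<and> int (card (gedges G')) - int (card T') - 2 * int (card (gverts G'))
        \<le> int (card (gedges G)) - int (card T) - 2 * int (card (gverts G)) + 1"
proof -
  obtain d0 d1 n where fb: "fold_base G d0 d1" and n: "n \<notin> gedges G" and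
     V': "gverts G' = gverts G" and E': "gedges G' = (gedges G - {fst d1}) \<union> {n}" and
     st: "\<forall>e\<in>gedges G - {fst d1}. gsrc G' e = gsrc G e \<and> gtgt G' e = gtgt G e" and
     vm: "\<forall>v\<in>gverts G. vmap fo v = v" and
     em: "\<forall>e\<in>gedges G - {fst d1}. emap fo e = [(e, True)]"
    using fold unfolding full_fold_def by (elim exE conjE) (rule that; assumption)
  have fin: "finite (gedges G)" "finite (gverts G)" using wfG by (auto simp: wf_graph_def)
  have d1E: "fst d1 \<in> gedges G" using fold_base_in[OF wfG fb] by simp
  have WW: "vmap fo ` W = W" using vm WV by (force simp: image_iff)
  define T' where "T' = T - {fst d1}"
  have "card (gedges G') = card (gedges G)"
  proof -
    have "card (gedges G) > 0" using d1E fin card_gt_0_iff by blast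
    then show ?thesis using E' n d1E fin by (simp add: card_insert_if)
  qed
  moreover have "card T \<le> card T' + 1" unfolding T'_def
    using finite_subset[OF TE fin(1)] by (simp add: card_Diff_singleton_if; arith)
  ultimately have cnt: "int (card (gedges G')) - int (card T') - 2 * int (card (gverts G'))
        \<le> int (card (gedges G)) - int (card T) - 2 * int (card (gverts G)) + 1"
    using V' by simp
  have sem: "\<forall>c'\<in>T'. \<exists>c\<in>T. \<exists>b. emap fo c = [(c',b)]"
  proof
    fix c' assume "c' \<in> T'"
    then have "c' \<in> T" "emap fo c' = [(c', True)]" using em TE unfolding T'_def by auto
    then show "\<exists>c\<in>T. \<exists>b. emap fo c = [(c',b)]" by blast
  qed
  show ?thesis
    apply (rule exI[of _ T'])
    using cnt TE Tend st E' WW sem unfolding T'_def by auto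
qed

lemma partial_step:
  fixes G G' :: "('v,'e) mgraph"
  assumes wfG: "wf_graph G" and wfG': "wf_graph G'" and fold: "partial_fold G fo G'"
    and WV: "W \<subseteq> gverts G"
    and TE: "T \<subseteq> gedges G"
    and Tend: "\<forall>c\<in>T. gsrc G c \<in> W \<and> gtgt G c \<in> W"
  shows "\<exists>T'. T' \<subseteq> gedges G' \<and> (\<forall>c\<in>T'. gsrc G' c \<in> vmap fo ` W \<and> gtgt G' c \<in> vmap fo ` W)
     \<and> (\<forall>c'\<in>T'. \<exists>c\<in>T. \<exists>b. emap fo c = [(c',b)])
     \<and> int (card (gedges G')) - int (card T') - 2 * int (card (gverts G'))
        \<le> int (card (gedges G)) - int (card T) - 2 * int (card (gverts G)) + 1"
proof -
  obtain d0 d1 w a b c where fb: "fold_base G d0 d1" and w: "w \<notin> gverts G" and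
     abc: "a \<notin> gedges G" "b \<notin> gedges G" "c \<notin> gedges G" "a \<noteq> b" "a \<noteq> c" "b \<noteq> c" and
     V': "gverts G' = gverts G \<union> {w}" and
     E': "gedges G' = (gedges G - {fst d0, fst d1}) \<union> {a, b, c}" and
     st: "\<forall>e\<in>gedges G - {fst d0, fst d1}. gsrc G' e = gsrc G e \<and> gtgt G' e = gtgt G e" and
     vm: "\<forall>v\<in>gverts G. vmap fo v = v" and
     em: "\<forall>e\<in>gedges G - {fst d0, fst d1}. emap fo e = [(e, True)]"
    using fold unfolding partial_fold_def by (elim exE conjE) (rule that; assumption)
  have fin: "finite (gedges G)" "finite (gverts G)" using wfG by (auto simp: wf_graph_def)
  have dE: "fst d1 \<in> gedges G" "fst d0 \<in> gedges G" "fst d0 \<noteq> fst d1"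
    using fold_base_in[OF wfG fb] fb by (auto simp: fold_base_def)
  have WW: "vmap fo ` W = W" using vm WV by (force simp: image_iff)
  define T' where "T' = T - {fst d0, fst d1}"
  have c1: "card (gedges G - {fst d0, fst d1}) = card (gedges G) - 2"
    using dE fin by (simp add: card_Diff_subset)
  have c2: "card (gedges G') = card (gedges G - {fst d0, fst d1}) + 3"
    unfolding E' using abc fin by (simp add: card_insert_if)
  have c3: "card (gedges G) \<ge> 2"
  proof -
    have "card {fst d0, fst d1} \<le> card (gedges G)" using dE fin by (intro card_mono) auto
    then show ?thesis using dE by simp
  qed
  have "card T \<le> card T' + 2" unfolding T'_def
  proof -
    have "card T \<le> card (T - {fst d0, fst d1}) + card {fst d0, fst d1}"
    proof -
      have "T \<subseteq> (T - {fst d0, fst d1}) \<union> {fst d0, fst d1}" by blast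
      then have "card T \<le> card ((T - {fst d0, fst d1}) \<union> {fst d0, fst d1})"
        using TE fin by (intro card_mono) (auto intro: finite_subset)
      also have "\<dots> \<le> card (T - {fst d0, fst d1}) + card {fst d0, fst d1}" by (rule card_Un_le)
      finally show ?thesis .
    qed
    also have "card {fst d0, fst d1} \<le> 2" by (simp add: card_insert_if)
    finally show "card T \<le> card (T - {fst d0, fst d1}) + 2" by simp
  qed
  moreover have "card (gverts G') = card (gverts G) + 1" using V' w fin by simp
  ultimately have cnt: "int (card (gedges G')) - int (card T') - 2 * int (card (gverts G'))
        \<le> int (card (gedges G)) - int (card T) - 2 * int (card (gverts G)) + 1"
    using c1 c2 c3 by simp
  have sem: "\<forall>c'\<in>T'. \<exists>c\<in>T. \<exists>b. emap fo c = [(c',b)]"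
  proof
    fix c' assume "c' \<in> T'"
    then have "c' \<in> T" "emap fo c' = [(c', True)]" using em TE unfolding T'_def by auto
    then show "\<exists>c\<in>T. \<exists>b. emap fo c = [(c',b)]" by blast
  qed
  show ?thesis
    apply (rule exI[of _ T'])
    using cnt TE Tend st E' WW sem unfolding T'_def by auto
qed

lemma complete_step:
  fixes G G' :: "('v,'e) mgraph"
  assumes wfG: "wf_graph G" and wfG': "wf_graph G'" and fold: "complete_fold G fo G'"
    and WV: "W \<subseteq> gverts G"
    and injW: "card (vmap fo ` W) = card W"
    and TE: "T \<subseteq> gedges G"
    and Tend: "\<forall>c\<in>T. gsrc G c \<in> W \<and> gtgt G c \<in> W"
  shows "\<exists>T'. T' \<subseteq> gedges G' \<and> (\<forall>c\<in>T'. gsrc G' c \<in> vmap fo ` W \<and> gtgt G' c \<in> vmap fo ` W)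
     \<and> (\<forall>c'\<in>T'. \<exists>c\<in>T. \<exists>b. emap fo c = [(c',b)])
     \<and> int (card (gedges G')) - int (card T') - 2 * int (card (gverts G'))
        \<le> int (card (gedges G)) - int (card T) - 2 * int (card (gverts G)) + 1"
proof -
  obtain d0 d1 where fb: "fold_base G d0 d1" and
     rest: "let q = (\<lambda>v. if v = oterm G d1 then oterm G d0 else v) in
       gverts G' = q ` gverts G \<and> gedges G' = gedges G - {fst d1} \<and>
       (\<forall>e\<in>gedges G'. gsrc G' e = q (gsrc G e) \<and> gtgt G' e = q (gtgt G e)) \<and>
       (\<forall>v\<in>gverts G. vmap fo v = q v) \<and>
       (\<forall>e\<in>gedges G - {fst d1}. emap fo e = [(e, True)]) \<and>
       img fo d1 = [d0]"
    using fold unfolding complete_fold_def by (elim exE conjE) (rule that; assumption)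
  define q where "q = (\<lambda>v. if v = oterm G d1 then oterm G d0 else v)"
  have V': "gverts G' = q ` gverts G" and E': "gedges G' = gedges G - {fst d1}" and
     st: "\<forall>e\<in>gedges G'. gsrc G' e = q (gsrc G e) \<and> gtgt G' e = q (gtgt G e)" and
     vm: "\<forall>v\<in>gverts G. vmap fo v = q v" and
     em: "\<forall>e\<in>gedges G - {fst d1}. emap fo e = [(e, True)]" and
     im1: "img fo d1 = [d0]"
    using rest unfolding q_def[symmetric] Let_def by auto
  have fin: "finite (gedges G)" "finite (gverts G)" using wfG by (auto simp: wf_graph_def)
  have finW: "finite W" using WV fin finite_subset by auto
  have dE: "fst d1 \<in> gedges G" "fst d0 \<in> gedges G" "fst d0 \<noteq> fst d1"
    "oterm G d0 \<in> gverts G" "oterm G d1 \<in> gverts G" "oinit G d0 = oinit G d1"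
    using fold_base_in[OF wfG fb] fb by (auto simp: fold_base_def)
  have WW: "vmap fo ` W = q ` W" using vm WV by (intro image_cong) auto
  have cE: "card (gedges G') = card (gedges G) - 1" "card (gedges G) \<ge> 1"
  proof -
    show "card (gedges G) \<ge> 1" using dE fin card_gt_0_iff[of "gedges G"] by (simp add: Suc_le_eq) blast
    show "card (gedges G') = card (gedges G) - 1" using E' dE by (simp add: card_Diff_singleton)
  qed
  have cV: "card (gverts G') + 1 \<ge> card (gverts G)"
  proof -
    have "gverts G \<subseteq> insert (oterm G d1) (gverts G')" using V' unfolding q_def by (auto simp: image_iff)
    then have "card (gverts G) \<le> card (insert (oterm G d1) (gverts G'))"
      using fin wfG' by (intro card_mono) (auto simp: wf_graph_def)
    also have "\<dots> \<le> card (gverts G') + 1" using wfG' by (simp add: wf_graph_def card_insert_if)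
    finally show ?thesis .
  qed
  have cV2: "oterm G d1 = oterm G d0 \<Longrightarrow> card (gverts G') = card (gverts G)"
    using V' unfolding q_def by simp
  have img1: "\<exists>b. emap fo (fst d1) = [(fst d0, b)]"
  proof (cases "snd d1")
    case True then show ?thesis using im1 by (cases d1; cases d0) (auto simp: img_def)
  next
    case False
    then have "rev_path (emap fo (fst d1)) = [d0]" using im1 by (cases d1) (auto simp: img_def)
    then have "emap fo (fst d1) = rev_path [d0]" by (metis rev_path_rev_path)
    then show ?thesis by (cases d0) auto
  qed
  have endp: "gsrc G e \<in> {oinit G (e, b), oterm G (e, b)}" "gtgt G e \<in> {oinit G (e, b), oterm G (e, b)}" for e b
    by (auto simp: oinit_def oterm_def)
  have endq: "gsrc G' c \<in> q ` W \<and> gtgt G' c \<in> q ` W"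
    if "c \<in> gedges G - {fst d1}" "gsrc G c \<in> W" "gtgt G c \<in> W" for c
    using st E' that by auto
  show ?thesis
  proof (cases "fst d1 \<in> T")
    case False
    have sem: "\<forall>c'\<in>T. \<exists>c\<in>T. \<exists>b. emap fo c = [(c',b)]"
    proof
      fix c' assume "c' \<in> T"
      then have "emap fo c' = [(c', True)]" using em TE False by auto
      then show "\<exists>c\<in>T. \<exists>b. emap fo c = [(c',b)]" using \<open>c' \<in> T\<close> by blast
    qed
    have Tend0: "\<forall>c\<in>T. gsrc G' c \<in> vmap fo ` W \<and> gtgt G' c \<in> vmap fo ` W"
    proof
      fix c assume c: "c \<in> T"
      then have "c \<in> gedges G - {fst d1}" using TE False by auto
      then show "gsrc G' c \<in> vmap fo ` W \<and> gtgt G' c \<in> vmap fo ` W"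
        using endq[of c] Tend c WW by auto
    qed
    have "T \<subseteq> gedges G'" using TE E' False by auto
    moreover have "int (card (gedges G')) - int (card T) - 2 * int (card (gverts G'))
        \<le> int (card (gedges G)) - int (card T) - 2 * int (card (gverts G)) + 1"
      using cE cV by simp
    ultimately show ?thesis using sem Tend0 by blast
  next
    case True
    define T' where "T' = insert (fst d0) (T - {fst d1})"
    have sem: "\<forall>c'\<in>T'. \<exists>c\<in>T. \<exists>b. emap fo c = [(c',b)]"
    proof
      fix c' assume "c' \<in> T'"
      show "\<exists>c\<in>T. \<exists>b. emap fo c = [(c',b)]"
      proof (cases "c' = fst d0")
        case True then show ?thesis using img1 \<open>fst d1 \<in> T\<close> by blast
      next
        case False
        then have "c' \<in> T" "c' \<noteq> fst d1" using \<open>c' \<in> T'\<close> T'_def by auto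
        then have "emap fo c' = [(c', True)]" using em TE by auto
        then show ?thesis using \<open>c' \<in> T\<close> by blast
      qed
    qed
    have d1W: "oinit G d1 \<in> W" "oterm G d1 \<in> W" using True Tend by (auto simp: oinit_def oterm_def)
    have end0: "gsrc G' (fst d0) \<in> q ` W \<and> gtgt G' (fst d0) \<in> q ` W"
    proof -
      have a: "q (oinit G d0) \<in> q ` W" using d1W dE by auto
      have "q (oterm G d0) = q (oterm G d1)" unfolding q_def by auto
      then have b: "q (oterm G d0) \<in> q ` W" using d1W by auto
      have "fst d0 \<in> gedges G'" using E' dE by auto
      then show ?thesis using st a b endp[of "fst d0" "snd d0"] by auto
    qed
    have T'E: "T' \<subseteq> gedges G'" using TE E' dE unfolding T'_def by auto
    have Tend': "\<forall>c\<in>T'. gsrc G' c \<in> vmap fo ` W \<and> gtgt G' c \<in> vmap fo ` W"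
    proof
      fix c assume c: "c \<in> T'"
      show "gsrc G' c \<in> vmap fo ` W \<and> gtgt G' c \<in> vmap fo ` W"
      proof (cases "c = fst d0")
        case True then show ?thesis using end0 WW by simp
      next
        case False
        then have "c \<in> gedges G - {fst d1}" "c \<in> T" using TE c unfolding T'_def by auto
        then show ?thesis using endq[of c] Tend WW by auto
      qed
    qed
    have finT: "finite T" using TE fin finite_subset by auto
    have cT1: "card (T - {fst d1}) + 1 = card T" using True finT card_gt_0_iff[of T]
      by (auto simp: card_Diff_singleton)
    have cnt: "int (card (gedges G')) - int (card T') - 2 * int (card (gverts G'))
        \<le> int (card (gedges G)) - int (card T) - 2 * int (card (gverts G)) + 1"
    proof (cases "fst d0 \<in> T")
      case False
      then have "card T' = card T" unfolding T'_def using cT1 finT by simp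
      then show ?thesis using cE cV by simp
    next
      case d0T: True
      have eq: "oterm G d1 = oterm G d0"
      proof (rule ccontr)
        assume ne: "oterm G d1 \<noteq> oterm G d0"
        have d0W: "oterm G d0 \<in> W" using d0T Tend by (auto simp: oterm_def)
        have "q ` W \<subseteq> W - {oterm G d1}" using ne d0W WV unfolding q_def by auto
        then have "card (q ` W) \<le> card (W - {oterm G d1})" using finW by (intro card_mono) auto
        also have "\<dots> < card W" using d1W finW by (intro card_Diff1_less)
        finally show False using injW WW by simp
      qed
      have "card T' + 1 = card T" unfolding T'_def using cT1 finT d0T dE
        by (simp add: insert_absorb)
      then show ?thesis using cE cV2[OF eq] by simp
    qed
    show ?thesis
      apply (rule exI[of _ T'])
      using cnt T'E Tend' sem by blast
  qed
qed

lemma vmap_gcomp[simp]: "vmap (gcomp g f) = vmap g \<circ> vmap f" by (simp add: gcomp_def)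

lemma decomp_inv:
  fixes \<Gamma> :: "('v,'e) mgraph"
  assumes wf: "wf_graph \<Gamma>" and G0: "Gs 0 = \<Gamma>" and folds: "\<forall>i<m. is_fold (Gs i) (fs i) (Gs (Suc i))"
   and inj: "\<forall>i\<le>m. inj_on (vmap (chain fs i)) (gverts \<Gamma>)"
  shows "i \<le> m \<Longrightarrow> wf_graph (Gs i) \<and> vmap (chain fs i) ` gverts \<Gamma> \<subseteq> gverts (Gs i) \<and>
    (\<exists>T. T \<subseteq> gedges (Gs i) \<and>
      (\<forall>c\<in>T. gsrc (Gs i) c \<in> vmap (chain fs i) ` gverts \<Gamma> \<and> gtgt (Gs i) c \<in> vmap (chain fs i) ` gverts \<Gamma>) \<and>
      (\<forall>c\<in>T. \<exists>e\<in>gedges \<Gamma>. \<exists>b. emap (chain fs i) e = [(c,b)]) \<and>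
      int (card (gedges (Gs i))) - int (card T) - 2 * int (card (gverts (Gs i))) \<le> int i - 2 * int (card (gverts \<Gamma>)))"
proof (induction i)
  case 0
  have sem: "\<forall>c\<in>gedges \<Gamma>. \<exists>e\<in>gedges \<Gamma>. \<exists>b. emap (chain fs 0) e = [(c,b)]"
    by (auto simp: gid_def)
  have "\<forall>c\<in>gedges \<Gamma>. gsrc \<Gamma> c \<in> vmap (chain fs 0) ` gverts \<Gamma> \<and> gtgt \<Gamma> c \<in> vmap (chain fs 0) ` gverts \<Gamma>"
    using wf by (auto simp: gid_def wf_graph_def)
  then show ?case using wf G0 sem by (auto simp: gid_def intro!: exI[of _ "gedges \<Gamma>"])
next
  case (Suc i)
  then have im: "i < m" by simp
  from Suc.IH im obtain T where wfi: "wf_graph (Gs i)" and Wsub: "vmap (chain fs i) ` gverts \<Gamma> \<subseteq> gverts (Gs i)"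
    and TE: "T \<subseteq> gedges (Gs i)"
    and Tend: "\<forall>c\<in>T. gsrc (Gs i) c \<in> vmap (chain fs i) ` gverts \<Gamma> \<and> gtgt (Gs i) c \<in> vmap (chain fs i) ` gverts \<Gamma>"
    and Tsem: "\<forall>c\<in>T. \<exists>e\<in>gedges \<Gamma>. \<exists>b. emap (chain fs i) e = [(c,b)]"
    and cnt: "int (card (gedges (Gs i))) - int (card T) - 2 * int (card (gverts (Gs i))) \<le> int i - 2 * int (card (gverts \<Gamma>))"
    by auto
  define W where "W = vmap (chain fs i) ` gverts \<Gamma>"
  have fold: "is_fold (Gs i) (fs i) (Gs (Suc i))" using folds im by blast
  have wf': "wf_graph (Gs (Suc i))" using fold by (simp add: is_fold_def)
  have vc: "vmap (chain fs (Suc i)) ` gverts \<Gamma> = vmap (fs i) ` W" unfolding W_def by (simp add: image_comp)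
  have finV: "finite (gverts \<Gamma>)" using wf by (simp add: wf_graph_def)
  have injW: "card (vmap (fs i) ` W) = card W"
  proof -
    have "card W = card (gverts \<Gamma>)" unfolding W_def using inj im by (intro card_image) auto
    moreover have "card (vmap (chain fs (Suc i)) ` gverts \<Gamma>) = card (gverts \<Gamma>)"
      using inj Suc.prems by (intro card_image) auto
    ultimately show ?thesis using vc by simp
  qed
  have WV: "W \<subseteq> gverts (Gs i)" using Wsub W_def by simp
  have Tend': "\<forall>c\<in>T. gsrc (Gs i) c \<in> W \<and> gtgt (Gs i) c \<in> W" using Tend W_def by simp
  have step: "\<exists>T'. T' \<subseteq> gedges (Gs (Suc i)) \<and> (\<forall>c\<in>T'. gsrc (Gs (Suc i)) c \<in> vmap (fs i) ` W \<and> gtgt (Gs (Suc i)) c \<in> vmap (fs i) ` W)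
     \<and> (\<forall>c'\<in>T'. \<exists>c\<in>T. \<exists>b. emap (fs i) c = [(c',b)])
     \<and> int (card (gedges (Gs (Suc i)))) - int (card T') - 2 * int (card (gverts (Gs (Suc i))))
        \<le> int (card (gedges (Gs i))) - int (card T) - 2 * int (card (gverts (Gs i))) + 1"
    using fold unfolding is_fold_def
  proof (elim conjE disjE)
    assume "full_fold (Gs i) (fs i) (Gs (Suc i))"
    then show ?thesis using full_step[OF wfi wf' _ WV TE Tend'] by blast
  next
    assume "complete_fold (Gs i) (fs i) (Gs (Suc i))"
    then show ?thesis using complete_step[OF wfi wf' _ WV injW TE Tend'] by blast
  next
    assume "partial_fold (Gs i) (fs i) (Gs (Suc i))"
    then show ?thesis using partial_step[OF wfi wf' _ WV TE Tend'] by blast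
  qed
  then obtain T' where T'E: "T' \<subseteq> gedges (Gs (Suc i))"
    and T'end: "\<forall>c\<in>T'. gsrc (Gs (Suc i)) c \<in> vmap (fs i) ` W \<and> gtgt (Gs (Suc i)) c \<in> vmap (fs i) ` W"
    and T'sem: "\<forall>c'\<in>T'. \<exists>c\<in>T. \<exists>b. emap (fs i) c = [(c',b)]"
    and cnt': "int (card (gedges (Gs (Suc i)))) - int (card T') - 2 * int (card (gverts (Gs (Suc i))))
        \<le> int (card (gedges (Gs i))) - int (card T) - 2 * int (card (gverts (Gs i))) + 1"
    by blast
  have sem': "\<forall>c'\<in>T'. \<exists>e\<in>gedges \<Gamma>. \<exists>b. emap (chain fs (Suc i)) e = [(c',b)]"
  proof
    fix c' assume "c' \<in> T'"
    then obtain c b where c: "c \<in> T" "emap (fs i) c = [(c',b)]" using T'sem by blast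
    then obtain e b0 where e: "e \<in> gedges \<Gamma>" "emap (chain fs i) e = [(c,b0)]" using Tsem by blast
    have "emap (chain fs (Suc i)) e = img (fs i) (c, b0)" using e(2) by (simp add: gcomp_def)
    then show "\<exists>e\<in>gedges \<Gamma>. \<exists>b. emap (chain fs (Suc i)) e = [(c',b)]"
    proof -
      obtain b'' where "img (fs i) (c, b0) = [(c', b'')]" using img_single[OF c(2), of b0] by blast
      then have "emap (chain fs (Suc i)) e = [(c', b'')]" using \<open>emap (chain fs (Suc i)) e = img (fs i) (c, b0)\<close> by simp
      then show ?thesis using e(1) by blast
    qed
  qed
  have Wsub': "vmap (chain fs (Suc i)) ` gverts \<Gamma> \<subseteq> gverts (Gs (Suc i))"
    using vc fold_vmap_sub[OF fold] WV by blast
  show ?case using wf' Wsub' T'E T'end sem' cnt' cnt vc by (intro conjI exI[of _ T']) auto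
qed



lemma img_True'[simp]: "img f (c, True) = emap f c" by (simp add: img_def)
lemma img_False'[simp]: "img f (c, False) = rev_path (emap f c)" by (simp add: img_def)
lemma rev_path_single'[simp]: "rev_path [(c,b)] = [(c, \<not> b)]" by (simp add: rev_path_def orev_def)

lemma perm_period:
  assumes fin: "finite V" and bij: "bij_betw p V V"
  shows "\<exists>n>0. \<forall>v\<in>V. (p ^^ n) v = v"
proof -
  define g where "g k = restrict (p ^^ k) V" for k
  have "g ` UNIV \<subseteq> V \<rightarrow>\<^sub>E V"
    using bij_betw_funpow[OF bij] unfolding g_def by (auto simp: bij_betw_def PiE_def) blast
  then have "finite (g ` UNIV)" using fin by (meson finite_PiE finite_subset)
  then have "\<not> inj g" using finite_imageD infinite_UNIV_nat by blast
  then obtain i j where ij: "g i = g j" "i \<noteq> j" unfolding inj_def by blast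
  have key: "\<forall>v\<in>V. (p ^^ (j - i)) v = v" if ij: "g i = g j" "i < j" for i j
  proof
    fix v assume v: "v \<in> V"
    have inj: "inj_on (p ^^ i) V" using bij_betw_funpow[OF bij] unfolding bij_betw_def by blast
    have w: "(p ^^ (j - i)) v \<in> V" by (rule bij_betw_apply[OF bij_betw_funpow[OF bij] v])
    have "(p ^^ i) ((p ^^ (j - i)) v) = (p ^^ j) v"
    proof -
      have "p ^^ (i + (j - i)) = p ^^ i \<circ> p ^^ (j - i)" by (rule funpow_add)
      then show ?thesis using ij(2) by simp
    qed
    also have "\<dots> = (p ^^ i) v"
    proof -
      have "g i v = g j v" using ij(1) by simp
      then show ?thesis using v unfolding g_def by simp
    qed
    finally show "(p ^^ (j - i)) v = v" using inj w v by (meson inj_onD)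
  qed
  show ?thesis
  proof (cases "i < j")
    case True then show ?thesis using key[OF ij(1) True] by (intro exI[of _ "j - i"]) auto
  next
    case False then have "j < i" using ij by simp
    then show ?thesis using key[OF ij(1)[symmetric]] by (intro exI[of _ "i - j"]) auto
  qed
qed

lemma funpow_mult_id:
  assumes "\<forall>v\<in>V. (p ^^ n) v = v" "v \<in> V" shows "(p ^^ (n * k)) v = v"
proof (induction k)
  case 0 then show ?case by simp
next
  case (Suc k)
  have "(p ^^ (n * Suc k)) v = (p ^^ n) ((p ^^ (n * k)) v)"
  proof -
    have "p ^^ (n + n * k) = p ^^ n \<circ> p ^^ (n * k)" by (rule funpow_add)
    then show ?thesis by simp
  qed
  then show ?case using Suc assms by simp
qed

lemma funpow_mod:
  assumes "\<forall>v\<in>V. (p ^^ n) v = v" "v \<in> V" "n > 0" shows "(p ^^ (k mod n)) v = (p ^^ k) v"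
proof -
  have "k = k mod n + n * (k div n)" by simp
  moreover have "p ^^ (k mod n + n * (k div n)) = p ^^ (k mod n) \<circ> p ^^ (n * (k div n))" by (rule funpow_add)
  ultimately have "(p ^^ k) v = (p ^^ (k mod n)) ((p ^^ (n * (k div n))) v)"
    by (metis o_apply)
  then show ?thesis using funpow_mult_id[OF assms(1,2)] by simp
qed

lemma gpow_single:
  assumes "\<forall>k<n. (\<sigma> ^^ k) x \<in> D" and fD: "\<forall>e\<in>D. emap f e = [(\<sigma> e, ob e)]"
  shows "\<exists>b. emap (gpow f n) x = [((\<sigma> ^^ n) x, b)]"
  using assms(1)
proof (induction n)
  case 0
  have "emap (gpow f 0) x = [((\<sigma> ^^ 0) x, True)]" by (simp add: gid_def)
  then show ?case by blast
next
  case (Suc n)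
  then obtain b where b: "emap (gpow f n) x = [((\<sigma> ^^ n) x, b)]" by auto
  have inD: "(\<sigma> ^^ n) x \<in> D" using Suc.prems by auto
  have "emap (gpow f (Suc n)) x = img f ((\<sigma> ^^ n) x, b)" using b by (simp add: gcomp_def)
  then show ?case using fD inD by (cases b) auto
qed

lemma path1: "is_path G [d] u v \<longleftrightarrow> d \<in> oedges G \<and> oinit G d = u \<and> oterm G d = v"
  by (auto simp: is_path_def)

lemma stack_bound:
  fixes \<Gamma> :: "(nat,nat) mgraph" and f :: "(nat,nat,nat,nat) gmap"
  assumes wf: "wf_graph \<Gamma>" and gm: "is_gmap \<Gamma> \<Gamma> f" and exp: "expanding \<Gamma> f"
    and bij: "bij_betw (vmap f) (gverts \<Gamma>) (gverts \<Gamma>)"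
    and DE: "D \<subseteq> gedges \<Gamma>" and sE: "\<sigma> ` D \<subseteq> gedges \<Gamma>" and injs: "inj_on \<sigma> D"
    and fD: "\<forall>e\<in>D. emap f e = [(\<sigma> e, ob e)]"
  shows "stack_score \<Gamma> \<le> card (gedges \<Gamma> - D)"
proof -
  define V where "V = gverts \<Gamma>"
  define E where "E = gedges \<Gamma>"
  define p where "p = vmap f"
  have finE: "finite E" and finV: "finite V" using wf by (auto simp: wf_graph_def E_def V_def)
  have endV: "gsrc \<Gamma> e \<in> V" "gtgt \<Gamma> e \<in> V" if "e \<in> E" for e
    using wf that by (auto simp: wf_graph_def E_def V_def)
  have bijp: "bij_betw p V V" using bij by (simp add: p_def V_def)
  have pV: "(p ^^ k) v \<in> V" if "v \<in> V" for k v by (rule bij_betw_apply[OF bij_betw_funpow[OF bijp] that])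
  obtain n0 where n0: "n0 > 0" "\<forall>v\<in>V. (p ^^ n0) v = v" using perm_period[OF finV bijp] by blast
  define N where "N = n0 * 2"
  have N2: "N \<ge> 2" using n0 by (simp add: N_def)
  have perN: "\<forall>v\<in>V. (p ^^ N) v = v" unfolding N_def using funpow_mult_id[OF n0(2)] by blast
  have pmod: "(p ^^ (k mod N)) v = (p ^^ k) v" if "v \<in> V" for k v
    using funpow_mod[OF perN that] N2 by simp
  have pNm1: "(p ^^ (N - 1)) (p v) = v" if "v \<in> V" for v
  proof -
    have "p ^^ Suc (N - 1) = p ^^ (N - 1) \<circ> p" by (rule funpow_Suc_right)
    then have "(p ^^ (N - 1)) (p v) = (p ^^ N) v" using N2 by simp
    then show ?thesis using perN that by simp
  qed
  define M where "M = Suc (Max (insert 0 E))"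
  have ltM: "e < M" if "e \<in> E" for e
    using that finE unfolding M_def by (simp add: le_imp_less_Suc)
  have dm: "(M * j + e) div M = j" "(M * j + e) mod M = e" if "e < M" for j e
    using that by auto
  have Mpos: "M > 0" by (simp add: M_def)
  define EG where "EG = (\<lambda>(j, e). M * j + e) ` ({..<N} \<times> E)"
  have EG_iff: "x \<in> EG \<longleftrightarrow> x div M < N \<and> x mod M \<in> E" for x
  proof
    assume "x \<in> EG"
    then obtain j e where je: "x = M * j + e" "j < N" "e \<in> E" unfolding EG_def by auto
    then show "x div M < N \<and> x mod M \<in> E" using dm[OF ltM[OF je(3)]] by auto
  next
    assume a: "x div M < N \<and> x mod M \<in> E"
    have "(x div M, x mod M) \<in> {..<N} \<times> E" using a by simp
    then have "(\<lambda>(j, e). M * j + e) (x div M, x mod M) \<in> EG" unfolding EG_def by (rule imageI)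
    then have "M * (x div M) + x mod M \<in> EG" by simp
    then show "x \<in> EG" by (simp only: mult_div_mod_eq)
  qed
  have finEG: "finite EG" unfolding EG_def using finE by auto
  have E0: "x div M = 0" "x mod M = x" if "x \<in> E" for x using ltM[OF that] by auto
  have EEG: "E \<subseteq> EG" using EG_iff E0 N2 by auto
  define G :: "(nat, nat) mgraph" where
    "G = \<lparr>gverts = V, gedges = EG, gsrc = (\<lambda>x. (p ^^ (x div M)) (gsrc \<Gamma> (x mod M))),
          gtgt = (\<lambda>x. (p ^^ (x div M)) (gtgt \<Gamma> (x mod M)))\<rparr>"
  have Gs: "gsrc G x = (p ^^ (x div M)) (gsrc \<Gamma> (x mod M))" "gtgt G x = (p ^^ (x div M)) (gtgt \<Gamma> (x mod M))"
    "gverts G = V" "gedges G = EG" for x by (simp_all add: G_def)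
  have GE: "gsrc G e = gsrc \<Gamma> e" "gtgt G e = gtgt \<Gamma> e" if "e \<in> E" for e
    using E0[OF that] by (simp_all add: Gs)
  have oGE: "oinit G (e, b) = oinit \<Gamma> (e, b)" "oterm G (e, b) = oterm \<Gamma> (e, b)" if "e \<in> E" for e b
    using GE[OF that] by (simp_all add: oinit_def oterm_def)
  have wfG: "wf_graph G"
    unfolding wf_graph_def using finV finEG by (auto simp: Gs EG_iff intro!: pV endV)
  have sup: "supergraph \<Gamma> G"
    unfolding supergraph_def using wfG EEG GE by (auto simp: Gs V_def E_def)
  define si where "si = the_inv_into D \<sigma>"
  have si1: "si c \<in> D" "\<sigma> (si c) = c" if "c \<in> \<sigma> ` D" for c
    using that injs unfolding si_def by (auto intro: the_inv_into_into f_the_inv_into_f)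
  have si2: "si (\<sigma> e) = e" if "e \<in> D" for e
    using that injs unfolding si_def by (simp add: the_inv_into_f_f)
  define C2 where "C2 x \<longleftrightarrow> x div M = N - 1 \<and> x mod M \<in> \<sigma> ` D" for x
  define tau where "tau x = (if x \<in> D then M * (N - 1) + \<sigma> x else if C2 x then si (x mod M) else x)" for x
  define pi where "pi x = M * ((x div M + 1) mod N) + x mod M" for x
  define ob' where "ob' x = (if x \<in> D then ob x else if C2 x then ob (si (x mod M)) else True)" for x
  define \<psi> :: "(nat,nat,nat,nat) gmap" where "\<psi> = \<lparr>vmap = p, emap = (\<lambda>x. [(pi (tau x), ob' x)])\<rparr>"
  have DE': "x \<in> E" if "x \<in> D" for x using that DE E_def by auto
  have sE': "\<sigma> x \<in> E" if "x \<in> D" for x using that sE E_def by auto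
  have notC2D: "\<not> C2 x" if "x \<in> D" for x using E0[OF DE'[OF that]] N2 by (auto simp: C2_def)
  have tauD: "tau x = M * (N - 1) + \<sigma> x" if "x \<in> D" for x using that by (simp add: tau_def)
  have tauC2: "tau x = si (x mod M)" if "C2 x" for x
    using that notC2D by (auto simp: tau_def)
  have tau3: "tau x = x" if "x \<notin> D" "\<not> C2 x" for x using that by (simp add: tau_def)
  have tau_in: "tau x \<in> EG \<and> tau (tau x) = x" if "x \<in> EG" for x
  proof (cases "x \<in> D")
    case True
    have lt: "\<sigma> x < M" using ltM sE' True by blast
    have "C2 (tau x)" using tauD[OF True] dm[OF lt] True by (simp add: C2_def)
    moreover have "tau x \<notin> D" using calculation notC2D by blast
    ultimately have "tau (tau x) = si (\<sigma> x)" using tauC2 tauD[OF True] dm[OF lt] by simp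
    then show ?thesis using si2 True tauD[OF True] dm[OF lt] EG_iff sE' N2 by simp
  next
    case False
    show ?thesis
    proof (cases "C2 x")
      case True
      then have c: "x mod M \<in> \<sigma> ` D" by (simp add: C2_def)
      have "tau x \<in> D" using tauC2[OF True] si1[OF c] by simp
      then have "tau (tau x) = M * (N - 1) + \<sigma> (si (x mod M))" using tauD tauC2[OF True] by simp
      also have "\<dots> = M * (x div M) + x mod M" using si1[OF c] True by (simp add: C2_def)
      also have "\<dots> = x" by simp
      finally show ?thesis using \<open>tau x \<in> D\<close> EEG DE' by auto
    next
      case False
      then show ?thesis using tau3 \<open>x \<notin> D\<close> that by simp
    qed
  qed
  have pi_dm: "pi x div M = (x div M + 1) mod N" "pi x mod M = x mod M" if "x \<in> EG" for x
  proof -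
    have "x mod M < M" using that EG_iff ltM by blast
    then show "pi x div M = (x div M + 1) mod N" "pi x mod M = x mod M"
      unfolding pi_def using dm by blast+
  qed
  have pi_in: "pi x \<in> EG" if "x \<in> EG" for x using pi_dm[OF that] that N2 EG_iff by simp
  have inj_pi: "inj_on pi EG"
  proof (rule inj_onI)
    fix x y assume x: "x \<in> EG" and y: "y \<in> EG" and eq: "pi x = pi y"
    have m: "x mod M = y mod M" using pi_dm[OF x] pi_dm[OF y] eq by simp
    have "(x div M + 1) mod N = (y div M + 1) mod N" using pi_dm[OF x] pi_dm[OF y] eq by simp
    moreover have "x div M < N" "y div M < N" using x y EG_iff by auto
    ultimately have "x div M = y div M"
      by (metis Suc_eq_plus1 Suc_leI le_neq_implies_less mod_less mod_self nat.inject old.nat.distinct(1) zero_less_Suc)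
    then show "x = y" using m by (metis mult_div_mod_eq)
  qed
  have inj_tau: "inj_on tau EG" by (rule inj_onI) (metis tau_in)
  have inj_pt: "inj_on (\<lambda>x. pi (tau x)) EG"
  proof (rule inj_onI)
    fix x y assume "x \<in> EG" "y \<in> EG" "pi (tau x) = pi (tau y)"
    then show "x = y" using inj_pi tau_in inj_tau by (metis inj_onD)
  qed
  have fpath: "oinit \<Gamma> (\<sigma> e, ob e) = p (gsrc \<Gamma> e) \<and> oterm \<Gamma> (\<sigma> e, ob e) = p (gtgt \<Gamma> e)" if "e \<in> D" for e
    using gm DE'[OF that] fD that unfolding is_gmap_def p_def E_def by (auto simp: path1)
  have ppath: "oinit G (pi (tau x), ob' x) = p (gsrc G x) \<and> oterm G (pi (tau x), ob' x) = p (gtgt G x)"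
    if x: "x \<in> EG" for x
  proof (cases "x \<in> D")
    case True
    have lt: "\<sigma> x < M" using ltM sE' True by blast
    have "pi (tau x) = \<sigma> x" using tauD[OF True] dm[OF lt] N2 unfolding pi_def by simp
    moreover have "ob' x = ob x" using True by (simp add: ob'_def)
    ultimately show ?thesis using fpath[OF True] oGE[OF sE'[OF True]] GE[OF DE'[OF True]] by simp
  next
    case nD: False
    show ?thesis
    proof (cases "C2 x")
      case True
      then have c: "x mod M \<in> \<sigma> ` D" and j: "x div M = N - 1" by (simp_all add: C2_def)
      define e where "e = si (x mod M)"
      have eD: "e \<in> D" and se: "\<sigma> e = x mod M" using si1[OF c] by (simp_all add: e_def)
      have lte: "e < M" using ltM DE' eD by blast
      have pt: "pi (tau x) = M + e" using tauC2[OF True] E0[OF DE'[OF eD]] N2 unfolding pi_def e_def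
        by (simp add: E0[OF DE'[OF eD]])
      have ob: "ob' x = ob e" using nD True by (simp add: ob'_def e_def)
      have s1: "gsrc G (M + e) = p (gsrc \<Gamma> e)" "gtgt G (M + e) = p (gtgt \<Gamma> e)"
        using dm[OF lte, of 1] by (simp_all add: Gs)
      have gx: "gsrc G x = (p ^^ (N - 1)) (gsrc \<Gamma> (\<sigma> e))" "gtgt G x = (p ^^ (N - 1)) (gtgt \<Gamma> (\<sigma> e))"
        using j se by (simp_all add: Gs)
      have fp: "oinit \<Gamma> (\<sigma> e, ob e) = p (gsrc \<Gamma> e)" "oterm \<Gamma> (\<sigma> e, ob e) = p (gtgt \<Gamma> e)"
        using fpath[OF eD] by auto
      have V2: "gsrc \<Gamma> e \<in> V" "gtgt \<Gamma> e \<in> V" using endV DE'[OF eD] by auto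
      show ?thesis
      proof (cases "ob e")
        case True
        then have "gsrc \<Gamma> (\<sigma> e) = p (gsrc \<Gamma> e)" "gtgt \<Gamma> (\<sigma> e) = p (gtgt \<Gamma> e)"
          using fp by (simp_all add: oinit_def oterm_def)
        then have "gsrc G x = gsrc \<Gamma> e" "gtgt G x = gtgt \<Gamma> e" using gx pNm1 V2 by simp_all
        then show ?thesis using pt ob True s1 by (simp add: oinit_def oterm_def)
      next
        case False
        then have "gtgt \<Gamma> (\<sigma> e) = p (gsrc \<Gamma> e)" "gsrc \<Gamma> (\<sigma> e) = p (gtgt \<Gamma> e)"
          using fp by (simp_all add: oinit_def oterm_def)
        then have "gsrc G x = gtgt \<Gamma> e" "gtgt G x = gsrc \<Gamma> e" using gx pNm1 V2 by simp_all
        then show ?thesis using pt ob False s1 by (simp add: oinit_def oterm_def)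
      qed
    next
      case False
      have t: "tau x = x" "ob' x = True" using tau3[OF nD False] nD False by (simp_all add: ob'_def)
      have em: "x mod M \<in> E" using x EG_iff by simp
      have "gsrc G (pi x) = (p ^^ Suc (x div M)) (gsrc \<Gamma> (x mod M))"
        using pi_dm[OF x] pmod endV[OF em] by (simp add: Gs)
      moreover have "gtgt G (pi x) = (p ^^ Suc (x div M)) (gtgt \<Gamma> (x mod M))"
        using pi_dm[OF x] pmod endV[OF em] by (simp add: Gs)
      ultimately show ?thesis using t by (simp add: oinit_def oterm_def Gs)
    qed
  qed
  have giso: "is_giso G G \<psi>"
  proof -
    have gmG: "is_gmap G G \<psi>"
      unfolding is_gmap_def
    proof (intro conjI ballI)
      fix v assume "v \<in> gverts G" then show "vmap \<psi> v \<in> gverts G"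
        using bijp by (simp add: \<psi>_def Gs bij_betw_apply)
    next
      fix x assume x: "x \<in> gedges G"
      then show "is_path G (emap \<psi> x) (vmap \<psi> (gsrc G x)) (vmap \<psi> (gtgt G x))"
        using ppath[of x] pi_in tau_in by (simp add: \<psi>_def path1 Gs oedges_def)
    qed
    have hd_img: "hd (img \<psi> d) = (pi (tau (fst d)), if snd d then ob' (fst d) else \<not> ob' (fst d))" for d
      by (cases d; cases "snd d") (auto simp: \<psi>_def img_def)
    have sub: "(\<lambda>d. hd (img \<psi> d)) ` oedges G \<subseteq> oedges G"
      using pi_in tau_in by (auto simp: hd_img oedges_def Gs)
    have inj: "inj_on (\<lambda>d. hd (img \<psi> d)) (oedges G)"
    proof (rule inj_onI)
      fix d d' assume d: "d \<in> oedges G" and d': "d' \<in> oedges G" and eq: "hd (img \<psi> d) = hd (img \<psi> d')"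
      then have "fst d = fst d'" using inj_pt by (auto simp: hd_img oedges_def Gs inj_on_def)
      then show "d = d'" using eq by (cases d; cases d') (auto simp: hd_img split: if_splits)
    qed
    have finO: "finite (oedges G)" using finEG by (simp add: oedges_def Gs)
    have "bij_betw (\<lambda>d. hd (img \<psi> d)) (oedges G) (oedges G)"
      unfolding bij_betw_def using inj endo_inj_surj[OF finO sub inj] by simp
    moreover have "bij_betw (vmap \<psi>) (gverts G) (gverts G)" using bijp by (simp add: \<psi>_def Gs)
    ultimately show ?thesis using gmG unfolding is_giso_def by (simp add: \<psi>_def)
  qed
  define S where "S = stack_gen \<Gamma> \<psi>"
  define R where "R = (S \<union> S\<inverse>)\<^sup>*"
  have Rgen: "(e, \<sigma> e) \<in> R" if "e \<in> D" for e
  proof -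
    have lt: "\<sigma> e < M" using ltM sE' that by blast
    have "pi (tau e) = \<sigma> e" using tauD[OF that] dm[OF lt] N2 unfolding pi_def by simp
    then have "(e, \<sigma> e) \<in> S" using DE' sE' that by (simp add: S_def stack_gen_def \<psi>_def E_def)
    then show ?thesis unfolding R_def by blast
  qed
  have Rsym: "(y, x) \<in> R" if "(x, y) \<in> R" for x y
  proof -
    have "sym (S \<union> S\<inverse>)" by (simp add: sym_Un_converse)
    then have "sym R" unfolding R_def by (rule sym_rtrancl)
    then show ?thesis using that by (simp add: sym_def)
  qed
  have Rtrans: "(x, z) \<in> R" if "(x, y) \<in> R" "(y, z) \<in> R" for x y z
    using that unfolding R_def by (rule rtrancl_trans)
  have reach: "\<exists>y\<in>E - D. (x, y) \<in> R" if x: "x \<in> E" for x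
  proof (rule ccontr)
    assume no: "\<not> (\<exists>y\<in>E - D. (x, y) \<in> R)"
    have all: "(\<sigma> ^^ k) x \<in> D \<and> (x, (\<sigma> ^^ k) x) \<in> R" for k
    proof (induction k)
      case 0
      have "(x, x) \<in> R" unfolding R_def by simp
      then show ?case using no x by auto
    next
      case (Suc k)
      then have "(x, \<sigma> ((\<sigma> ^^ k) x)) \<in> R" using Rgen Rtrans by blast
      moreover have "\<sigma> ((\<sigma> ^^ k) x) \<in> E" using Suc sE' by blast
      ultimately show ?case using no by auto
    qed
    have len: "length (emap (gpow f n) x) = 1" for n
      using gpow_single[of n \<sigma> x D f ob] all fD by auto
    have "filterlim (\<lambda>n. length (emap (gpow f n) x)) at_top sequentially"
      using exp x unfolding expanding_def E_def by blast
    then have "eventually (\<lambda>n. (2::nat) \<le> length (emap (gpow f n) x)) sequentially"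
      unfolding filterlim_at_top by blast
    then show False using len by simp
  qed
  have "E // R \<subseteq> (\<lambda>y. R `` {y}) ` (E - D)"
  proof
    fix X assume "X \<in> E // R"
    then obtain x where x: "x \<in> E" "X = R `` {x}" unfolding quotient_def by blast
    obtain y where y: "y \<in> E - D" "(x, y) \<in> R" using reach[OF x(1)] by blast
    have "R `` {x} = R `` {y}" using y(2) Rsym Rtrans by blast
    then show "X \<in> (\<lambda>y. R `` {y}) ` (E - D)" using x y by blast
  qed
  then have "card (E // R) \<le> card ((\<lambda>y. R `` {y}) ` (E - D))"
    using finE by (intro card_mono) auto
  also have "\<dots> \<le> card (E - D)" by (rule card_image_le) (use finE in simp)
  finally have cls: "stack_classes \<Gamma> \<psi> \<le> card (E - D)"
    by (simp add: stack_classes_def R_def S_def E_def)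
  have "stack_score \<Gamma> \<le> stack_classes \<Gamma> \<psi>"
    unfolding stack_score_def by (rule Least_le) (use sup giso in blast)
  then show ?thesis using cls by (simp add: E_def)
qed


lemma chain_factor: "i \<le> k \<Longrightarrow> \<exists>R. \<forall>v. vmap (chain fs k) v = R (vmap (chain fs i) v)"
proof (induction k)
  case 0 then show ?case by (intro exI[of _ id]) simp
next
  case (Suc k)
  show ?case
  proof (cases "i = Suc k")
    case True then show ?thesis by (intro exI[of _ id]) simp
  next
    case False
    then obtain R where "\<forall>v. vmap (chain fs k) v = R (vmap (chain fs i) v)" using Suc by auto
    then show ?thesis by (intro exI[of _ "vmap (fs k) \<circ> R"]) simp
  qed
qed

theorem theoremB:
  fixes \<Gamma> :: "(nat, nat) mgraph" and f :: "(nat, nat, nat, nat) gmap" and m :: nat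
  assumes "wf_graph \<Gamma>"
    and "is_gmap \<Gamma> \<Gamma> f"
    and "irreducible_map \<Gamma> f"
    and "expanding \<Gamma> f"
    and "homotopy_equiv \<Gamma> f"
    and "bij_betw (vmap f) (gverts \<Gamma>) (gverts \<Gamma>)"
    and "fold_decomposition \<Gamma> f m"
  shows "stack_score \<Gamma> \<le> m"
proof -
  note wf = assms(1) and gm = assms(2) and exp = assms(4) and bij = assms(6)
  obtain Gs fs h where G0: "Gs 0 = \<Gamma>" and folds: "\<forall>i<m. is_fold (Gs i) (fs i) (Gs (Suc i))"
    and hiso: "is_giso (Gs m) \<Gamma> h" and feq: "gmap_eq \<Gamma> f (gcomp h (chain fs m))"
    using assms(7) unfolding fold_decomposition_def by blast
  define V where "V = gverts \<Gamma>"
  define E where "E = gedges \<Gamma>"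
  have finE: "finite E" and finV: "finite V" using wf by (auto simp: wf_graph_def E_def V_def)
  have fV: "vmap f v = vmap h (vmap (chain fs m) v)" if "v \<in> V" for v
    using feq that unfolding gmap_eq_def V_def by simp
  have fE: "emap f e = emap (gcomp h (chain fs m)) e" if "e \<in> E" for e
    using feq that unfolding gmap_eq_def E_def by simp
  have injf: "inj_on (vmap f) V" using bij by (simp add: bij_betw_def V_def)
  have inj: "\<forall>i\<le>m. inj_on (vmap (chain fs i)) (gverts \<Gamma>)"
  proof (intro allI impI inj_onI)
    fix i u v assume i: "i \<le> m" and u: "u \<in> gverts \<Gamma>" and v: "v \<in> gverts \<Gamma>"
      and eq: "vmap (chain fs i) u = vmap (chain fs i) v"
    obtain R where "\<forall>v. vmap (chain fs m) v = R (vmap (chain fs i) v)" using chain_factor[OF i] by blast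
    then have "vmap (chain fs m) u = vmap (chain fs m) v" using eq by simp
    then have "vmap f u = vmap f v" using fV u v V_def by simp
    then show "u = v" using injf u v V_def by (meson inj_onD)
  qed
  from decomp_inv[OF wf G0 folds inj, of m] obtain T where wfm: "wf_graph (Gs m)" and
    TE: "T \<subseteq> gedges (Gs m)" and
    Tsem: "\<forall>c\<in>T. \<exists>e\<in>gedges \<Gamma>. \<exists>b. emap (chain fs m) e = [(c,b)]" and
    cnt: "int (card (gedges (Gs m))) - int (card T) - 2 * int (card (gverts (Gs m))) \<le> int m - 2 * int (card (gverts \<Gamma>))"
    by auto
  have cV: "card (gverts (Gs m)) = card V"
    using hiso bij_betw_same_card unfolding is_giso_def V_def by blast
  have cEm: "card (gedges (Gs m)) = card E"
  proof -
    have "card (oedges (Gs m)) = card (oedges \<Gamma>)"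
      using hiso bij_betw_same_card unfolding is_giso_def by blast
    then show ?thesis by (simp add: oedges_def card_cartesian_product E_def)
  qed
  have cT: "card E \<le> card T + m" using cnt cV cEm by (simp add: V_def)
  define Hh where "Hh d = hd (img h d)" for d
  have hlen: "length (emap h c) = 1" if "c \<in> gedges (Gs m)" for c
    using hiso that unfolding is_giso_def by blast
  have Hh_img: "img h (c, b) = [Hh (c, b)]" if cm: "c \<in> gedges (Gs m)" for c b
  proof -
    obtain x where x: "emap h c = [x]" using hlen[OF cm] by (cases "emap h c") auto
    then show ?thesis by (cases b; cases x) (auto simp: Hh_def)
  qed
  have Hh_flip: "Hh (c, \<not> b) = orev (Hh (c, b))" if cm: "c \<in> gedges (Gs m)" for c b
  proof -
    obtain x where x: "emap h c = [x]" using hlen[OF cm] by (cases "emap h c") auto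
    then show ?thesis by (cases b; cases x) (auto simp: Hh_def orev_def)
  qed
  have Hbij: "bij_betw Hh (oedges (Gs m)) (oedges \<Gamma>)"
    using hiso unfolding is_giso_def Hh_def by blast
  have HhE: "fst (Hh (c, b)) \<in> E" if "c \<in> gedges (Gs m)" for c b
  proof -
    have "(c, b) \<in> oedges (Gs m)" using that by (simp add: oedges_def)
    then have "Hh (c, b) \<in> oedges \<Gamma>" by (rule bij_betw_apply[OF Hbij])
    then show ?thesis by (auto simp: oedges_def E_def)
  qed
  define ch where "ch c = (SOME e. e \<in> E \<and> (\<exists>b. emap (chain fs m) e = [(c,b)]))" for c
  have chP: "ch c \<in> E \<and> (\<exists>b. emap (chain fs m) (ch c) = [(c,b)])" if "c \<in> T" for c
  proof -
    have "\<exists>e. e \<in> E \<and> (\<exists>b. emap (chain fs m) e = [(c,b)])" using Tsem that E_def by blast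
    then show ?thesis unfolding ch_def by (rule someI_ex)
  qed
  define D where "D = ch ` T"
  define cc where "cc e = fst (hd (emap (chain fs m) e))" for e
  define bb where "bb e = snd (hd (emap (chain fs m) e))" for e
  define \<sigma> where "\<sigma> e = fst (Hh (cc e, bb e))" for e
  define ob where "ob e = snd (Hh (cc e, bb e))" for e
  have Dchar: "\<exists>c\<in>T. e = ch c \<and> emap (chain fs m) e = [(cc e, bb e)] \<and> cc e = c" if eD: "e \<in> D" for e
  proof -
    obtain c where c: "c \<in> T" "e = ch c" using eD D_def by blast
    obtain b where "emap (chain fs m) e = [(c, b)]" using chP[OF c(1)] c(2) by blast
    then show ?thesis using c by (simp add: cc_def bb_def)
  qed
  have DE: "D \<subseteq> gedges \<Gamma>" using chP D_def E_def by blast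
  have fD: "\<forall>e\<in>D. emap f e = [(\<sigma> e, ob e)]"
  proof
    fix e assume e: "e \<in> D"
    obtain c where c: "c \<in> T" "emap (chain fs m) e = [(cc e, bb e)]" "cc e = c" using Dchar[OF e] by blast
    have cm: "cc e \<in> gedges (Gs m)" using c TE by auto
    have "emap f e = img h (cc e, bb e)" using fE[of e] e DE c(2) E_def by (auto simp: gcomp_def)
    also have "\<dots> = [Hh (cc e, bb e)]" using Hh_img[OF cm] by simp
    finally show "emap f e = [(\<sigma> e, ob e)]" by (simp add: \<sigma>_def ob_def)
  qed
  have sE: "\<sigma> ` D \<subseteq> gedges \<Gamma>"
  proof
    fix y assume "y \<in> \<sigma> ` D"
    then obtain e where e: "e \<in> D" "y = \<sigma> e" by blast
    obtain c where c: "c \<in> T" "cc e = c" using Dchar[OF e(1)] by blast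
    show "y \<in> gedges \<Gamma>" using HhE[of "cc e" "bb e"] c TE e(2) E_def \<sigma>_def by auto
  qed
  have injs: "inj_on \<sigma> D"
  proof (rule inj_onI)
    fix e1 e2 assume e1: "e1 \<in> D" and e2: "e2 \<in> D" and eq: "\<sigma> e1 = \<sigma> e2"
    obtain c1 where c1: "c1 \<in> T" "e1 = ch c1" "cc e1 = c1" using Dchar[OF e1] by blast
    obtain c2 where c2: "c2 \<in> T" "e2 = ch c2" "cc e2 = c2" using Dchar[OF e2] by blast
    have m1: "c1 \<in> gedges (Gs m)" and m2: "c2 \<in> gedges (Gs m)" using c1 c2 TE by auto
    have inH: "inj_on Hh (oedges (Gs m))" using Hbij bij_betw_def by blast
    have o1: "(c1, bb e1) \<in> oedges (Gs m)" and o2: "(c2, b) \<in> oedges (Gs m)" for b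
      using m1 m2 by (auto simp: oedges_def)
    have f12: "fst (Hh (c1, bb e1)) = fst (Hh (c2, bb e2))" using eq c1 c2 by (simp add: \<sigma>_def)
    have "c1 = c2"
    proof (cases "snd (Hh (c1, bb e1)) = snd (Hh (c2, bb e2))")
      case True
      then have "Hh (c1, bb e1) = Hh (c2, bb e2)" using f12 by (simp add: prod_eq_iff)
      then have "(c1, bb e1) = (c2, bb e2)" using inH o1 o2 by (meson inj_onD)
      then show ?thesis by simp
    next
      case False
      then have "Hh (c1, bb e1) = orev (Hh (c2, bb e2))" using f12 by (simp add: prod_eq_iff orev_def)
      also have "\<dots> = Hh (c2, \<not> bb e2)" using Hh_flip[OF m2] by simp
      finally have "(c1, bb e1) = (c2, \<not> bb e2)" using inH o1 o2 by (meson inj_onD)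
      then show ?thesis by simp
    qed
    then show "e1 = e2" using c1 c2 by simp
  qed
  have inj_ch: "inj_on ch T"
  proof (rule inj_onI)
    fix c1 c2 assume c1: "c1 \<in> T" and c2: "c2 \<in> T" and eq: "ch c1 = ch c2"
    have "\<exists>b. emap (chain fs m) (ch c1) = [(c1, b)]" using chP[OF c1] by (elim conjE)
    then obtain b1 where h1: "emap (chain fs m) (ch c1) = [(c1, b1)]" by (elim exE)
    have "\<exists>b. emap (chain fs m) (ch c2) = [(c2, b)]" using chP[OF c2] by (elim conjE)
    then obtain b2 where h2: "emap (chain fs m) (ch c2) = [(c2, b2)]" by (elim exE)
    have "[(c1, b1)] = [(c2, b2)]" using h1 h2 eq by metis
    then show "c1 = c2" by simp
  qed
  have "finite (gedges (Gs m))" using wfm by (simp add: wf_graph_def)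
  then have finT: "finite T" using TE by (rule finite_subset[rotated])
  have "card D = card T" unfolding D_def using inj_ch by (rule card_image)
  moreover have "card (E - D) = card E - card D" 
  proof -
    have "D \<subseteq> E" using DE E_def by simp
    moreover have "finite D" using finE calculation by (rule finite_subset[rotated])
    ultimately show ?thesis by (rule card_Diff_subset[rotated])
  qed
  ultimately have "card (E - D) \<le> m" using cT by simp
  moreover have "stack_score \<Gamma> \<le> card (gedges \<Gamma> - D)"
    by (rule stack_bound[OF wf gm exp bij DE sE injs fD])
  ultimately show ?thesis by (simp add: E_def)
qed

end
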